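(* For every integer $n\ge 0$, \[ \sum_{k=0}^{n}(-4)^k\frac{\binom{n}{k}}{\binom{2k}{k}}H_{2k} =\frac{2H_{2n}-H_n}{2(2n-1)}-\frac{4n}{(2n-1)^2}. \]
   Context: For an integer $m\ge 0$, $H_m$ denotes the $m$-th harmonic number: $H_0=0$ and $H_m=\sum_{j=1}^m \frac1j$ for $m\ge1$. $\binom{n}{k}$ is the usual binomial coefficient. *)

theory Defs
  imports "HOL-Analysis.Analysis"
begin

end

theory Submission
  imports Defs
begin

definition aa :: "nat \<Rightarrow> nat \<Rightarrow> real" where
  "aa n k = (-4::real)^k * (real (n choose k) / real ((2*k) choose k))"

definition GG :: "nat \<Rightarrow> nat \<Rightarrow> real" where
  "GG n k = (1 - 2 * real k) / (2 * real n - 1) * aa n k"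

lemma g1: "(D::real) \<noteq> 0 \<Longrightarrow> a / D * x - b / D * y = (a * x - b * y) / D"
  by (simp add: diff_divide_distrib)

lemma g2: "(k::real) \<ge> 0 \<Longrightarrow> n \<ge> 0 \<Longrightarrow> c > 0 \<Longrightarrow> p * (b / c) / (k + 1) = p * ((n + 1) * b / (k + 1) / c) / (n + 1)"
proof -
  assume "k \<ge> 0" "n \<ge> 0" "c > 0"
  then have "n + 1 \<noteq> 0" by simp
  then show ?thesis by simp
qed

lemma g3: "(q::real) = 2 * r - 1 \<Longrightarrow> q \<noteq> 0 \<Longrightarrow> r \<noteq> 0 \<Longrightarrow> D \<noteq> 0 \<Longrightarrow> - q * x / D * (1/q + 1/(2*r)) = (x/r/2 - 2*x)/D"
proof -
  assume a: "q = 2 * r - 1" "q \<noteq> 0" "r \<noteq> 0" "D \<noteq> 0"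
  have h: "1 + q/(2*r) = (4*r-1)/(2*r)" using a by (simp add: field_simps)
  have "- q * x / D * (1/q + 1/(2*r)) = -x/D * (1 + q/(2*r))" using a by (simp add: field_simps)
  also have "\<dots> = -x/D * ((4*r-1)/(2*r))" by (simp only: h)
  also have "\<dots> = (x/r/2 - 2*x)/D" using a(3,4) by (simp add: field_simps)
  finally show ?thesis .
qed

lemma g4: "(n::real) \<ge> 0 \<Longrightarrow> (- 1 / (2 * (n+1) - 1) - 1) / (n + 1) = - 2 / (2 * n + 1)"
proof -
  assume a: "n \<ge> 0"
  then have b: "2*n+1 \<noteq> 0" "n+1 \<noteq> 0" by auto
  have "- 1 / (2 * (n+1) - 1) - 1 = -2*(n+1)/(2*n+1)" using b by (simp add: field_simps)
  then have "(- 1 / (2 * (n+1) - 1) - 1) / (n + 1) = -2*(n+1)/(2*n+1)/(n+1)" by simp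
  also have "\<dots> = -2/(2*n+1)" using a by (simp add: divide_simps)
  finally show ?thesis .
qed

lemma g5: "(D::real) \<noteq> 0 \<Longrightarrow> -(((hn - 2*h2)/2 - 2*(-1/D - 1))/D) = (2*h2 - hn)/(2*D) - 2*(D+1)/D^2"
  by (simp add: field_simps power2_eq_square)

lemma g7: "2 * w = v \<Longrightarrow> t = 2 * u \<Longrightarrow> (a::real) - 2 * b - t = a + v - 2 * (b + (u + w))"
  by simp

lemma cb_pos: "real ((2*k) choose k) > 0"
  by simp

lemma g6: "(F::real) > 0 \<Longrightarrow> (k::real) \<ge> 0 \<Longrightarrow> (2*k+2)*(2*k+1)*A/(((k+1)*F)*((k+1)*F)) = A/(F*F)*(2*(2*k+1)/(k+1))"
proof -
  assume a: "F > 0" "k \<ge> 0"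
  then have n: "F * F \<noteq> 0" "k + 1 \<noteq> 0" "((k+1)*F)*((k+1)*F) \<noteq> 0" "F*F*(k+1) \<noteq> 0" by auto
  have "A/(F*F)*(2*(2*k+1)/(k+1)) = A*(2*(2*k+1)) / (F*F*(k+1))" by simp
  also have "\<dots> = (2*k+2)*(2*k+1)*A/(((k+1)*F)*((k+1)*F))"
    using n by (subst frac_eq_eq) (auto simp: algebra_simps)
  finally show ?thesis by simp
qed

lemma central_step: "real ((2*Suc k) choose Suc k) = real ((2*k) choose k) * (2 * (2 * real k + 1) / (real k + 1))"
proof -
  have a: "real ((2*k) choose k) = fact (2*k) / (fact k * fact k)"
    by (subst binomial_fact) (auto simp: mult_2)
  have b: "real ((2*Suc k) choose Suc k) = fact (2*Suc k) / (fact (Suc k) * fact (Suc k))"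
  proof -
    have le: "Suc k \<le> 2*Suc k" by simp
    have m: "2*Suc k - Suc k = Suc k" by simp
    show ?thesis using binomial_fact[OF le, where 'a=real] unfolding m .
  qed
  have c: "(fact (2*Suc k)::real) = (2*real k+2)*(2*real k+1) * fact (2*k)"
  proof -
    have e: "2*Suc k = Suc (Suc (2*k))" by simp
    show ?thesis unfolding e by (simp only: fact_Suc) (simp add: algebra_simps)
  qed
  have d: "(fact (Suc k)::real) = (real k + 1) * fact k" by (simp only: fact_Suc) simp
  show ?thesis unfolding a b c d by (rule g6) auto
qed

lemma binom_step: "real (n choose Suc k) * (real k + 1) = real (n choose k) * (real n - real k)"
proof -
  have "real (Suc n) * real (n choose k) = real (Suc n choose Suc k) * real (Suc k)"
    using Suc_times_binomial_eq[of n k] by (metis of_nat_mult)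
  then show ?thesis by (simp add: algebra_simps)
qed

lemma alg0: "(q::real) \<noteq> 0 \<Longrightarrow> c \<noteq> 0 \<Longrightarrow> p * (-4) * (B / (c * (2 * q))) * q = -2 * p * B / c"
  by (simp add: field_simps)

lemma alg1: "c > 0 \<Longrightarrow> (k::real) \<ge> 0 \<Longrightarrow>
   p * (-4) * (b1 / (c * (2 * (2 * k + 1) / (k + 1)))) * (2 * k + 1) = -2 * p * (b1 * (k + 1)) / c"
proof -
  assume a: "c > 0" "k \<ge> 0"
  have "b1 / (c * (2 * (2 * k + 1) / (k + 1))) = b1 * (k+1) / (c * (2 * (2 * k + 1)))"
    using a by (simp add: field_simps)
  moreover have "2*k+1 \<noteq> 0" using a by simp
  ultimately show ?thesis using a alg0[of "2*k+1" c p "b1*(k+1)"] by simp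
qed

lemma ratio: "aa n (Suc k) * (2 * real k + 1) = -2 * (real n - real k) * aa n k"
proof -
  have p: "real ((2*k) choose k) > 0" by simp
  have "aa n (Suc k) = (-4)^k * (-4) * (real (n choose Suc k) / (real ((2*k) choose k) * (2 * (2 * real k + 1) / (real k + 1))))"
    unfolding aa_def central_step by simp
  then have "aa n (Suc k) * (2 * real k + 1) = -2 * (-4)^k * (real (n choose Suc k) * (real k + 1)) / real ((2*k) choose k)"
    using alg1[OF p, of "real k"] by simp
  also have "\<dots> = -2 * (real n - real k) * aa n k"
    unfolding binom_step aa_def using p by (simp add: field_simps)
  finally show ?thesis .
qed

lemma aa0: "aa n 0 = 1" by (simp add: aa_def)

lemma aa_big: "n < k \<Longrightarrow> aa n k = 0" by (simp add: aa_def)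

lemma den_ne: "2 * real n - 1 \<noteq> 0"
proof
  assume "2 * real n - 1 = 0"
  then have "real (2*n) = 1" by simp
  then have "2*n = 1" by linarith
  then show False by presburger
qed

lemma G_step: "GG n (Suc k) - GG n k = aa n k"
proof -
  define x where "x = aa n (Suc k)"
  define y where "y = aa n k"
  define D where "D = 2 * real n - 1"
  have D: "D \<noteq> 0" unfolding D_def by (rule den_ne)
  have r: "x * (2 * real k + 1) = -2 * (real n - real k) * y" unfolding x_def y_def by (rule ratio)
  have r2: "(1 - 2 * real (Suc k)) * x = 2 * (real n - real k) * y" using r by (simp add: algebra_simps)
  have "GG n (Suc k) - GG n k = ((1 - 2 * real (Suc k)) * x - (1 - 2 * real k) * y) / D"
    unfolding GG_def x_def y_def D_def using g1[OF D[unfolded D_def]] by simp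
  also have "\<dots> = (2 * (real n - real k) * y - (1 - 2 * real k) * y) / D" by (simp only: r2)
  also have "\<dots> = D * y / D" unfolding D_def by (simp add: algebra_simps)
  also have "\<dots> = y" using D by simp
  finally show ?thesis unfolding y_def .
qed

lemma asum: "(\<Sum>k<m. aa n k) = GG n m - GG n 0"
  by (induction m) (simp_all add: G_step[symmetric])

lemma asum_full: "(\<Sum>k<Suc (Suc n). aa n k) = - 1 / (2 * real n - 1)"
  unfolding asum by (simp add: GG_def aa_big aa0)

lemma harm2: "harm (2 * Suc k) = harm (2*k) + (1 / (2*real k + 1) + 1 / (2*real k + 2))"
proof -
  have "2 * Suc k = Suc (Suc (2*k))" by simp
  then have "harm (2 * Suc k) = harm (2*k) + inverse (real (Suc (2*k))) + inverse (real (Suc (Suc (2*k))))"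
    by (simp only: harm_Suc)
  also have "real (Suc (2*k)) = 2*real k + 1" by simp
  also have "real (Suc (Suc (2*k))) = 2*real k + 2" by simp
  finally show ?thesis by (simp add: inverse_eq_divide)
qed

lemma Psum: "(\<Sum>k<m. aa n k * harm (2*k)) = GG n m * harm (2*m) - (\<Sum>k<m. GG n (Suc k) * (1 / (2*real k + 1) + 1 / (2*real k + 2)))"
proof (induction m)
  case 0 then show ?case by (simp add: harm_def)
next
  case (Suc m)
  have g: "GG n (Suc m) = GG n m + aa n m" using G_step[of n m] by simp
  have h: "harm (2 * Suc m) = harm (2*m) + (1 / (2*real m + 1) + 1 / (2*real m + 2))" by (rule harm2)
  show ?case
    by (simp only: sum.lessThan_Suc Suc.IH h g) (simp add: algebra_simps)
qed

lemma Tdiff: "(aa (Suc n) (Suc k) - aa n (Suc k)) / (real k + 1) = aa (Suc n) (Suc k) / (real n + 1)"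
proof -
  have e: "real (Suc n) * real (n choose k) = real (Suc n choose Suc k) * real (Suc k)"
    using Suc_times_binomial_eq[of n k] by (metis of_nat_mult)
  define c where "c = real ((2*Suc k) choose Suc k)"
  define p where "p = (-4::real)^(Suc k)"
  have c: "c > 0" unfolding c_def by (rule cb_pos)
  have d: "real (Suc n choose Suc k) - real (n choose Suc k) = real (n choose k)" by simp
  have "aa (Suc n) (Suc k) - aa n (Suc k) = p * ((real (Suc n choose Suc k) - real (n choose Suc k)) / c)"
    unfolding aa_def c_def p_def by (simp only: diff_divide_distrib right_diff_distrib)
  also have "\<dots> = p * (real (n choose k) / c)" by (simp only: d)
  finally have 1: "aa (Suc n) (Suc k) - aa n (Suc k) = p * (real (n choose k) / c)" .
  have 2: "aa (Suc n) (Suc k) = p * (real (Suc n choose Suc k) / c)" unfolding aa_def c_def p_def by simp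
  have 3: "real (Suc n choose Suc k) = (real n + 1) * real (n choose k) / (real k + 1)"
    using e by (simp add: field_simps)
  have "(aa (Suc n) (Suc k) - aa n (Suc k)) / (real k + 1) = p * (real (n choose k) / c) / (real k + 1)"
    by (simp only: 1)
  also have "\<dots> = p * (real (Suc n choose Suc k) / c) / (real n + 1)"
    unfolding 3 using g2[OF _ _ c, of "real k" "real n" p "real (n choose k)"] by simp
  also have "\<dots> = aa (Suc n) (Suc k) / (real n + 1)" by (simp only: 2)
  finally show ?thesis .
qed

lemma Tsum: "(\<Sum>k<n. aa n (Suc k) / (real k + 1)) = harm n - 2 * harm (2*n)"
proof (induction n)
  case 0 then show ?case by (simp add: harm_def)
next
  case (Suc n)
  have ext: "(\<Sum>k<Suc n. aa n (Suc k) / (real k + 1)) = (\<Sum>k<n. aa n (Suc k) / (real k + 1))"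
    by (simp add: aa_big)
  have "(\<Sum>k<Suc n. aa (Suc n) (Suc k) / (real k + 1)) - (\<Sum>k<Suc n. aa n (Suc k) / (real k + 1))
      = (\<Sum>k<Suc n. (aa (Suc n) (Suc k) - aa n (Suc k)) / (real k + 1))"
    by (simp only: sum_subtractf diff_divide_distrib)
  also have "\<dots> = (\<Sum>k<Suc n. aa (Suc n) (Suc k) / (real n + 1))"
    by (rule sum.cong) (simp_all only: Tdiff)
  also have "\<dots> = (\<Sum>k<Suc n. aa (Suc n) (Suc k)) / (real n + 1)"
    by (rule sum_divide_distrib[symmetric])
  also have "(\<Sum>k<Suc n. aa (Suc n) (Suc k)) = (\<Sum>k<Suc (Suc (Suc n)). aa (Suc n) k) - 1"
  proof -
    have 1: "(\<Sum>k<Suc (Suc (Suc n)). aa (Suc n) k) = aa (Suc n) 0 + (\<Sum>k<Suc (Suc n). aa (Suc n) (Suc k))"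
      by (rule sum.lessThan_Suc_shift)
    have 2: "(\<Sum>k<Suc (Suc n). aa (Suc n) (Suc k)) = (\<Sum>k<Suc n. aa (Suc n) (Suc k)) + aa (Suc n) (Suc (Suc n))"
      by (rule sum.lessThan_Suc)
    show ?thesis unfolding 1 2 by (simp add: aa0 aa_big)
  qed
  also have "\<dots> = - 1 / (2 * real (Suc n) - 1) - 1" by (simp only: asum_full)
  finally have d: "(\<Sum>k<Suc n. aa (Suc n) (Suc k) / (real k + 1)) - (\<Sum>k<n. aa n (Suc k) / (real k + 1))
      = (- 1 / (2 * real (Suc n) - 1) - 1) / (real n + 1)" using ext by simp
  have h: "harm (2 * Suc n) = harm (2*n) + (1 / (2*real n + 1) + 1 / (2*real n + 2))" by (rule harm2)
  have e: "(- 1 / (2 * real (Suc n) - 1) - 1) / (real n + 1) = - 2 / (2 * real n + 1)"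
    using g4[of "real n"] by simp
  have hs: "harm (Suc n) = harm n + 1 / (real n + 1)" by (simp add: harm_Suc inverse_eq_divide add_ac)
  have "(\<Sum>k<Suc n. aa (Suc n) (Suc k) / (real k + 1)) = harm n - 2 * harm (2*n) - 2 / (2 * real n + 1)"
    using d e Suc.IH by simp
  also have "\<dots> = harm (Suc n) - 2 * harm (2 * Suc n)"
  proof -
    have q: "2 * (1 / (2 * real n + 2)) = 1 / (real n + 1)" by (simp add: divide_simps)
    have q2: "2 / (2 * real n + 1) = 2 * (1 / (2 * real n + 1))" by simp
    show ?thesis unfolding h hs by (rule g7[OF q q2])
  qed
  finally show ?case .
qed

theorem theorem1:
  fixes n :: nat
  shows "(\<Sum>k=0..n. (-4::real)^k * (real (n choose k) / real ((2*k) choose k)) * harm (2*k))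
    = (2 * harm (2*n) - harm n) / (2 * (2 * real n - 1)) - 4 * real n / (2 * real n - 1)^2"
proof -
  define D where "D = 2 * real n - 1"
  have D: "D \<noteq> 0" unfolding D_def by (rule den_ne)
  have "(\<Sum>k=0..n. (-4::real)^k * (real (n choose k) / real ((2*k) choose k)) * harm (2*k))
      = (\<Sum>k<Suc n. aa n k * harm (2*k))"
    by (simp add: aa_def atLeast0AtMost lessThan_Suc_atMost)
  also have "\<dots> = - (\<Sum>k<Suc n. GG n (Suc k) * (1 / (2*real k + 1) + 1 / (2*real k + 2)))"
    by (simp only: Psum) (simp add: GG_def aa_big)
  also have "(\<Sum>k<Suc n. GG n (Suc k) * (1 / (2*real k + 1) + 1 / (2*real k + 2)))
     = (\<Sum>k<Suc n. (aa n (Suc k) / (real k + 1) / 2 - 2 * aa n (Suc k)) / D)"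
  proof (rule sum.cong[OF refl])
    fix k
    define x where "x = aa n (Suc k)"
    have k1: "2 * real k + 1 \<noteq> 0" "real k + 1 \<noteq> 0" "2 * real k + 2 \<noteq> 0" by (simp_all add: add_pos_pos)
    have g: "GG n (Suc k) = -(2 * real k + 1) * x / D" unfolding GG_def x_def D_def by simp
    have "GG n (Suc k) * (1 / (2*real k + 1) + 1 / (2*real k + 2)) = -(2 * real k + 1) * x / D * (1 / (2*real k + 1) + 1 / (2*real k + 2))"
      by (simp only: g)
    also have "\<dots> = (x / (real k + 1) / 2 - 2 * x) / D"
      using g3[of "2 * real k + 1" "real k + 1" D x] D k1 by (simp add: algebra_simps)
    finally show "GG n (Suc k) * (1 / (2*real k + 1) + 1 / (2*real k + 2)) = (aa n (Suc k) / (real k + 1) / 2 - 2 * aa n (Suc k)) / D"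
      unfolding x_def .
  qed
  also have "\<dots> = ((\<Sum>k<Suc n. aa n (Suc k) / (real k + 1)) / 2 - 2 * (\<Sum>k<Suc n. aa n (Suc k))) / D"
    by (simp only: sum_divide_distrib[symmetric] sum_subtractf sum_distrib_left)
  also have "(\<Sum>k<Suc n. aa n (Suc k) / (real k + 1)) = harm n - 2 * harm (2*n)"
    by (simp add: aa_big Tsum)
  also have "(\<Sum>k<Suc n. aa n (Suc k)) = (\<Sum>k<Suc (Suc n). aa n k) - 1"
  proof -
    have 1: "(\<Sum>k<Suc (Suc n). aa n k) = aa n 0 + (\<Sum>k<Suc n. aa n (Suc k))"
      by (rule sum.lessThan_Suc_shift)
    show ?thesis unfolding 1 by (simp add: aa0)
  qed
  also have "\<dots> = - 1 / D - 1" unfolding D_def by (simp only: asum_full)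
  finally have "(\<Sum>k=0..n. (-4::real)^k * (real (n choose k) / real ((2*k) choose k)) * harm (2*k))
     = - (((harm n - 2 * harm (2 * n)) / 2 - 2 * (- 1 / D - 1)) / D)" .
  also have "\<dots> = (2 * harm (2*n) - harm n) / (2 * D) - 4 * real n / D^2"
  proof -
    have "4 * real n = 2 * (D + 1)" unfolding D_def by simp
    then show ?thesis using g5[OF D, of "harm n" "harm (2*n)"] by simp
  qed
  finally show ?thesis unfolding D_def .
qed

end
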